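(* Let $T$ be an interval exchange transformation over the ordered alphabet $\mathcal{A}=\{a_1<\dots<a_k\}$ whose permutation is the symmetric permutation $\pi(a_i)=a_{k-i+1}$. Then every return word in the language of $T$ is perfectly clustering; i.e., for every $w\in\mathcal{L}(T)$ and every $u\in\mathcal{R}(w)$, $\mathrm{bwt}_{\mathcal{A}}(u)=a_k^{|u|_{a_k}}a_{k-1}^{|u|_{a_{k-1}}}\cdots a_1^{|u|_{a_1}}$.
   Context: A $k$-IET $T$ on $I=[\ell,r)$ over $\mathcal{A}$ is given by a partition of $I$ into left-closed right-open intervals $(I_a)_{a\in\mathcal{A}}$ of positive length ordered left to right by the order of $\mathcal{A}$ and a permutation $\pi$ of $\mathcal{A}$; $T(x)=x+\tau_a$ on $I_a$ with $\tau_a=\sum_{b:\,\pi^{-1}(b)<\pi^{-1}(a)}|I_b|-\sum_{b<a}|I_b|$. No minimality or regularity is assumed. Trajectories $\Omega_T(x)=w_0w_1\cdots$ with $w_i=a$ iff $T^i(x)\in I_a$; $\mathcal{L}(T)$ is the set of finite factors of all trajectories. Return words: $\mathcal{R}(w)=\{u\in\mathcal{A}^*: uw\in(\mathcal{L}(T)\cap w\mathcal{A}^* )\setminus\mathcal{A}^+w\mathcal{A}^+\}$. For a word $v$ of length $n$, $\mathrm{bwt}_{\mathcal{A}}(v)$ is the word of last letters of the $n$ cyclic rotations of $v$ sorted lexicographically w.r.t. the order of $\mathcal{A}$. A word is perfectly clustering if it is $\pi$-clustering for the symmetric permutation, i.e. its Burrows–Wheeler transform has the displayed form. *)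

theory Defs
  imports Complex_Main "HOL-Library.List_Lexorder"
begin

text \<open>Alphabet A = {0 < 1 < ... < k-1} (letter a_i of the paper is i-1).
 An IET is given by k, left endpoint l, lengths len (positive on letters),
 and a permutation p of {..<k}.\<close>

definition iet_ok :: "nat \<Rightarrow> (nat \<Rightarrow> real) \<Rightarrow> (nat \<Rightarrow> nat) \<Rightarrow> bool" where
  "iet_ok k len p \<longleftrightarrow> (\<forall>a<k. len a > 0) \<and> bij_betw p {..<k} {..<k}"

definition iet_right :: "nat \<Rightarrow> real \<Rightarrow> (nat \<Rightarrow> real) \<Rightarrow> real" where
  "iet_right k l len = l + (\<Sum>b<k. len b)"

definition iet_subint :: "real \<Rightarrow> (nat \<Rightarrow> real) \<Rightarrow> nat \<Rightarrow> real set" where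
  "iet_subint l len a = {l + (\<Sum>b<a. len b) ..< l + (\<Sum>b<Suc a. len b)}"

definition iet_tau :: "nat \<Rightarrow> (nat \<Rightarrow> real) \<Rightarrow> (nat \<Rightarrow> nat) \<Rightarrow> nat \<Rightarrow> real" where
  "iet_tau k len p a =
     (\<Sum>b\<in>{b. b < k \<and> inv_into {..<k} p b < inv_into {..<k} p a}. len b)
     - (\<Sum>b<a. len b)"

definition iet_letter :: "nat \<Rightarrow> real \<Rightarrow> (nat \<Rightarrow> real) \<Rightarrow> real \<Rightarrow> nat" where
  "iet_letter k l len x = (THE a. a < k \<and> x \<in> iet_subint l len a)"

definition iet_map :: "nat \<Rightarrow> real \<Rightarrow> (nat \<Rightarrow> real) \<Rightarrow> (nat \<Rightarrow> nat) \<Rightarrow> real \<Rightarrow> real" where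
  "iet_map k l len p x = x + iet_tau k len p (iet_letter k l len x)"

definition iet_traj :: "nat \<Rightarrow> real \<Rightarrow> (nat \<Rightarrow> real) \<Rightarrow> (nat \<Rightarrow> nat) \<Rightarrow> real \<Rightarrow> nat \<Rightarrow> nat" where
  "iet_traj k l len p x n = iet_letter k l len ((iet_map k l len p ^^ n) x)"

definition iet_lang :: "nat \<Rightarrow> real \<Rightarrow> (nat \<Rightarrow> real) \<Rightarrow> (nat \<Rightarrow> nat) \<Rightarrow> nat list set" where
  "iet_lang k l len p = {w. \<exists>x\<in>{l..<iet_right k l len}. \<exists>i.
      w = map (iet_traj k l len p x) [i..<i + length w]}"

definition return_words :: "nat \<Rightarrow> real \<Rightarrow> (nat \<Rightarrow> real) \<Rightarrow> (nat \<Rightarrow> nat) \<Rightarrow> nat list \<Rightarrow> nat list set" where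
  "return_words k l len p w = {u. set u \<subseteq> {..<k} \<and>
      u @ w \<in> iet_lang k l len p \<and>
      (\<exists>y. set y \<subseteq> {..<k} \<and> u @ w = w @ y) \<and>
      \<not> (\<exists>x y. x \<noteq> [] \<and> y \<noteq> [] \<and> set x \<subseteq> {..<k} \<and> set y \<subseteq> {..<k} \<and> u @ w = x @ w @ y)}"

definition bwt :: "nat list \<Rightarrow> nat list" where
  "bwt v = map last (sort (map (\<lambda>i. rotate i v) [0..<length v]))"

definition clustered_form :: "nat \<Rightarrow> nat list \<Rightarrow> nat list" where
  "clustered_form k v = concat (map (\<lambda>j. replicate (count_list v (k - 1 - j)) (k - 1 - j)) [0..<k])"

end

theory Submission
  imports Defs "HOL-Library.Multiset"
begin

lemma lex_less:
  fixes xs ys :: "nat list"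
  assumes "length xs = length ys" "xs < ys"
  shows "\<exists>m<length xs. (\<forall>t<m. xs!t = ys!t) \<and> xs!m < ys!m"
proof -
  obtain i where "i < length xs" "take i xs = take i ys" "xs!i < ys!i"
    using assms unfolding list_less_def lexord_take_index_conv by auto
  moreover have "\<forall>t<i. xs!t = ys!t" using calculation(2) by (metis nth_take)
  ultimately show ?thesis by blast
qed

lemma rot_nth: "length u = n \<Longrightarrow> 0 < n \<Longrightarrow> i < n \<Longrightarrow> t < n \<Longrightarrow>
   rotate i u ! t = u!((t + (if i=0 then n else i)) mod n)"
  by (simp add: nth_rotate add.commute)

lemma rot_last: "length u = n \<Longrightarrow> 0 < n \<Longrightarrow> i < n \<Longrightarrow>
   last (rotate i u) = u!((if i=0 then n else i) - 1)"
proof -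
  assume a: "length u = n" "0 < n" "i < n"
  then have "rotate i u \<noteq> []" by auto
  then have "last (rotate i u) = rotate i u ! (n - 1)" using a by (simp add: last_conv_nth)
  also have "\<dots> = u!((i + (n - 1)) mod n)" using a by (simp add: nth_rotate)
  also have "(i + (n - 1)) mod n = (if i=0 then n else i) - 1"
  proof (cases "i = 0")
    case False
    then have e: "i + (n - 1) = (i - 1) + n" using a by simp
    have "((i - 1) + n) mod n = i - 1" using a by simp
    then show ?thesis using False by (simp only: e) simp
  qed (use a in simp)
  finally show ?thesis .
qed

locale symiet =
  fixes k :: nat and l :: real and len :: "nat \<Rightarrow> real" and p :: "nat \<Rightarrow> nat"
  assumes ok: "iet_ok k len p" and sym: "\<forall>i<k. p i = k - 1 - i"
begin

abbreviation "S a \<equiv> (\<Sum>b<a. len b)"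
abbreviation "T \<equiv> iet_map k l len p"
abbreviation "lt \<equiv> iet_letter k l len"
abbreviation "I \<equiv> {l..<iet_right k l len}"

lemma pos: "a < k \<Longrightarrow> len a > 0" using ok by (auto simp: iet_ok_def)

lemma S_mono: "b \<le> k \<Longrightarrow> a \<le> b \<Longrightarrow> S a \<le> S b"
proof (induction b)
  case 0 then show ?case by simp
next
  case (Suc b)
  show ?case
  proof (cases "a = Suc b")
    case False
    then have "S a \<le> S b" using Suc by auto
    moreover have "len b > 0" using pos Suc by auto
    ultimately show ?thesis by simp
  qed simp
qed

lemma subint_order: "z \<in> iet_subint l len a \<Longrightarrow> z' \<in> iet_subint l len b \<Longrightarrow> a < b \<Longrightarrow> b < k \<Longrightarrow> z < z'"
  using S_mono[of b "Suc a"] by (auto simp: iet_subint_def)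

lemma letter_char:
  assumes "z \<in> I" shows "lt z < k \<and> z \<in> iet_subint l len (lt z)"
proof -
  define A where "A = {a. a < k \<and> l + S a \<le> z}"
  have k0: "k > 0" using assms by (cases "k = 0") (auto simp: iet_right_def)
  have fA: "finite A" "0 \<in> A" using assms k0 by (auto simp: A_def)
  define a where "a = Max A"
  have aA: "a \<in> A" using fA unfolding a_def by (intro Max_in) auto
  have hi: "z < l + S (Suc a)"
  proof (cases "Suc a < k")
    case True
    then have "Suc a \<notin> A" using fA a_def by (metis Max_ge Suc_n_not_le_n)
    then show ?thesis using True by (auto simp: A_def)
  next
    case False
    then have "Suc a = k" using aA by (auto simp: A_def)
    then show ?thesis using assms by (auto simp: iet_right_def)
  qed
  have ex: "a < k \<and> z \<in> iet_subint l len a" using aA hi by (auto simp: A_def iet_subint_def)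
  have uq: "b = a" if "b < k \<and> z \<in> iet_subint l len b" for b
    using subint_order[of z b z a] subint_order[of z a z b] that ex by (metis less_irrefl nat_neq_iff)
  have "lt z = a" unfolding iet_letter_def using ex uq by (rule the_equality) 
  then show ?thesis using ex by simp
qed

lemma inv_p: "b < k \<Longrightarrow> inv_into {..<k} p b = k - 1 - b"
proof -
  assume b: "b < k"
  have "inj_on p {..<k}" using ok by (auto simp: iet_ok_def bij_betw_def)
  moreover have "p (k - 1 - b) = b" using sym b by auto
  ultimately show ?thesis using b by (intro inv_into_f_eq) auto
qed

lemma tau_eq: "a < k \<Longrightarrow> iet_tau k len p a = S k - S (Suc a) - S a"
proof -
  assume a: "a < k"
  have "{b. b < k \<and> inv_into {..<k} p b < inv_into {..<k} p a} = {Suc a..<k}"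
    using a by (auto simp: inv_p)
  moreover have "sum len {Suc a..<k} = S k - S (Suc a)"
    using sum.atLeastLessThan_concat[of 0 "Suc a" k len] a by (simp add: atLeast0LessThan)
  ultimately show ?thesis by (simp add: iet_tau_def)
qed

lemma T_range: assumes "z \<in> I" shows "l + S k - S (Suc (lt z)) \<le> T z \<and> T z < l + S k - S (lt z)"
proof -
  have "lt z < k" "z \<in> iet_subint l len (lt z)" using letter_char[OF assms] by auto
  then show ?thesis by (auto simp: iet_map_def tau_eq iet_subint_def)
qed

lemma T_in: assumes "z \<in> I" shows "T z \<in> I"
proof -
  have "lt z < k" using letter_char[OF assms] by auto
  then have h1: "S (Suc (lt z)) \<le> S k" by (intro S_mono) auto
  have h2: "S 0 \<le> S (lt z)" using \<open>lt z < k\<close> by (intro S_mono) auto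
  have "l + S k - S (Suc (lt z)) \<le> T z \<and> T z < l + S k - S (lt z)" by (rule T_range[OF assms])
  then have "l \<le> T z \<and> T z < l + S k" using h1 h2 by (simp only: lessThan_0 sum.empty) linarith
  then show ?thesis by (auto simp: iet_right_def)
qed

lemma Tn_in: "z \<in> I \<Longrightarrow> (T ^^ n) z \<in> I"
proof (induction n)
  case (Suc n)
  then have "T ((T ^^ n) z) \<in> I" by (intro T_in) 
  then show ?case by simp
qed simp

lemma T_rev: assumes "z \<in> I" "z' \<in> I" "lt z < lt z'" shows "T z' < T z"
proof -
  have "lt z' < k" using letter_char assms by auto
  then have h: "S (Suc (lt z)) \<le> S (lt z')" using assms(3) by (intro S_mono) auto
  have "l + S k - S (Suc (lt z)) \<le> T z \<and> T z < l + S k - S (lt z)" by (rule T_range[OF assms(1)])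
  moreover have "l + S k - S (Suc (lt z')) \<le> T z' \<and> T z' < l + S k - S (lt z')" by (rule T_range[OF assms(2)])
  ultimately show ?thesis using h by linarith
qed

lemma T_rev': "z \<in> I \<Longrightarrow> z' \<in> I \<Longrightarrow> T z < T z' \<Longrightarrow> lt z' \<le> lt z"
  using T_rev by force

lemma traj_shift: "iet_traj k l len p ((T ^^ a) x) t = iet_traj k l len p x (t + a)"
  by (simp add: iet_traj_def funpow_add)

lemma transl: "(\<forall>j<m. iet_traj k l len p x j = iet_traj k l len p x' j) \<Longrightarrow>
   (T ^^ m) x - (T ^^ m) x' = x - x'"
proof (induction m)
  case (Suc m)
  then have e: "lt ((T ^^ m) x) = lt ((T ^^ m) x')" by (auto simp: iet_traj_def)
  have "(T ^^ m) x - (T ^^ m) x' = x - x'" using Suc by auto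
  then have "T ((T ^^ m) x) - T ((T ^^ m) x') = x - x'" using e by (simp add: iet_map_def)
  then show ?case by simp
qed simp

lemma first_diff:
  assumes "x \<in> I" "x' \<in> I" "\<forall>j<m. iet_traj k l len p x j = iet_traj k l len p x' j"
    "iet_traj k l len p x m < iet_traj k l len p x' m"
  shows "x < x'"
proof (rule ccontr)
  assume "\<not> x < x'"
  then have le: "(T ^^ m) x' \<le> (T ^^ m) x" using transl[OF assms(3)] by simp
  have "(T ^^ m) x \<in> I" "(T ^^ m) x' \<in> I" using Tn_in assms by auto
  then have "(T ^^ m) x < (T ^^ m) x'" using subint_order letter_char assms(4)
    unfolding iet_traj_def by blast
  then show False using le by simp
qed


abbreviation "tr \<equiv> iet_traj k l len p"

lemma key:
  fixes u w :: "nat list" and x :: real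
  assumes x: "x \<in> I" and n: "length u = n" "n > 0"
  and s: "\<forall>j < n + length w. tr x j = (u@w)!j"
  and pre: "\<forall>t<length w. w!t = u!(t mod n)"
  and noocc: "\<forall>q. 0<q \<and> q<n \<longrightarrow> \<not>(\<forall>t<length w. (u@w)!(q+t) = w!t)"
  and ab: "1 \<le> a" "a \<le> n" "1 \<le> b" "b \<le> n"
  and agree: "\<forall>t<m. u!((t+a) mod n) = u!((t+b) mod n)"
  and less: "u!((m+a) mod n) < u!((m+b) mod n)"
  shows "u!(b-1) \<le> u!(a-1)"
proof -
  have F1: "(u@w)!j = u!(j mod n)" if "j < n + length w" for j
  proof (cases "j < n")
    case True then show ?thesis using n by (simp add: nth_append)
  next
    case False
    then have "(u@w)!j = w!(j-n)" using n by (simp add: nth_append)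
    also have "\<dots> = u!((j-n) mod n)" using pre that False by auto
    also have "(j-n) mod n = j mod n" using False by (simp add: le_mod_geq)
    finally show ?thesis .
  qed
  have neq: "a \<noteq> b" using less by auto
  have bound: "m + max a b < n + length w"
  proof (rule ccontr)
    assume H: "\<not> m + max a b < n + length w"
    define c where "c = max a b"
    define d where "d = min a b"
    have cd: "d < c" "c \<le> n" "1 \<le> d" using neq ab by (auto simp: c_def d_def)
    define q where "q = d + (n - c)"
    have q: "0 < q" "q < n" using cd by (auto simp: q_def)
    have "(u@w)!(q+t) = w!t" if t: "t < length w" for t
    proof -
      have "(u@w)!(q+t) = u!((q+t) mod n)" using F1 q t by auto
      also have "u!((q+t) mod n) = u!((n - c + t + d) mod n)" by (simp add: q_def add.commute add.left_commute)
      also have "\<dots> = u!((n - c + t + c) mod n)"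
      proof -
        have "n - c + t < m" using H t cd unfolding c_def by linarith
        then have "u!((n - c + t + a) mod n) = u!((n - c + t + b) mod n)" using agree by blast
        then show ?thesis unfolding c_def d_def by (cases "a \<le> b") (auto simp: max_def min_def)
      qed
      also have "n - c + t + c = t + n" using cd by simp
      also have "u!((t + n) mod n) = w!t" using pre t by simp
      finally show ?thesis .
    qed
    then show False using noocc q by blast
  qed
  have ta: "tr x (t + a) = u!((t+a) mod n)" if "t \<le> m" for t
  proof -
    have "t + a < n + length w" using bound that by (simp add: max_def split: if_splits)
    then show ?thesis using s F1 by simp
  qed
  have tb: "tr x (t + b) = u!((t+b) mod n)" if "t \<le> m" for t
  proof -
    have "t + b < n + length w" using bound that by (simp add: max_def split: if_splits)
    then show ?thesis using s F1 by simp
  qed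
  have "(T ^^ a) x < (T ^^ b) x"
  proof (rule first_diff[where m = m])
    show "(T ^^ a) x \<in> I" "(T ^^ b) x \<in> I" using Tn_in x by auto
    show "\<forall>j<m. tr ((T ^^ a) x) j = tr ((T ^^ b) x) j"
    proof (intro allI impI)
      fix j assume "j < m"
      then show "tr ((T ^^ a) x) j = tr ((T ^^ b) x) j"
        unfolding traj_shift using ta[of j] tb[of j] agree by simp
    qed
    show "tr ((T ^^ a) x) m < tr ((T ^^ b) x) m"
      unfolding traj_shift using ta[of m] tb[of m] less by simp
  qed
  moreover obtain a' b' where ab': "a = Suc a'" "b = Suc b'" using ab by (metis Suc_pred' less_eq_Suc_le numeral_nat(7))
  ultimately have "T ((T ^^ a') x) < T ((T ^^ b') x)" by simp
  then have "lt ((T ^^ b') x) \<le> lt ((T ^^ a') x)"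
    using T_rev' Tn_in x by blast
  moreover have "lt ((T ^^ a') x) = tr x a'" "lt ((T ^^ b') x) = tr x b'" by (simp_all add: iet_traj_def)
  moreover have "tr x a' = (u@w)!a'" "tr x b' = (u@w)!b'" using s ab ab' n by auto
  moreover have "(u@w)!a' = u!a'" "(u@w)!b' = u!b'" using ab ab' n by (auto simp: nth_append)
  ultimately show ?thesis using ab' by simp
qed


lemma rot_claim:
  fixes u w :: "nat list" and x :: real
  assumes x: "x \<in> I" and n: "length u = n" "n > 0"
  and s: "\<forall>j < n + length w. tr x j = (u@w)!j"
  and pre: "\<forall>t<length w. w!t = u!(t mod n)"
  and noocc: "\<forall>q. 0<q \<and> q<n \<longrightarrow> \<not>(\<forall>t<length w. (u@w)!(q+t) = w!t)"
  and ij: "i < n" "j < n" and lessr: "rotate i u < rotate j u"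
  shows "last (rotate j u) \<le> last (rotate i u)"
proof -
  obtain m where m: "m < n" "\<forall>t<m. rotate i u ! t = rotate j u ! t" "rotate i u ! m < rotate j u ! m"
    using lex_less[OF _ lessr] n by auto
  define a where "a = (if i = 0 then n else i)"
  define b where "b = (if j = 0 then n else j)"
  have ab: "1 \<le> a" "a \<le> n" "1 \<le> b" "b \<le> n" using ij n by (auto simp: a_def b_def)
  have agree: "\<forall>t<m. u!((t+a) mod n) = u!((t+b) mod n)"
    using m(1,2) rot_nth[OF n ij(1)] rot_nth[OF n ij(2)] by (auto simp: a_def b_def)
  have less: "u!((m+a) mod n) < u!((m+b) mod n)"
    using m(1,3) rot_nth[OF n ij(1)] rot_nth[OF n ij(2)] by (auto simp: a_def b_def)
  have "u!(b-1) \<le> u!(a-1)" by (rule key[OF x n s pre noocc ab agree less])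
  then show ?thesis using rot_last[OF n ij(1)] rot_last[OF n ij(2)] by (simp add: a_def b_def)
qed

end

lemma bwt_sorted:
  fixes u :: "nat list"
  assumes "\<forall>i<length u. \<forall>j<length u. rotate i u < rotate j u \<longrightarrow> last (rotate j u) \<le> last (rotate i u)"
  shows "rev (bwt u) = sort u"
proof (cases "u = []")
  case True then show ?thesis by (simp add: bwt_def)
next
  case False
  define n where "n = length u"
  have n0: "n > 0" using False by (simp add: n_def)
  define R where "R = map (\<lambda>i. rotate i u) [0..<n]"
  define L where "L = sort R"
  have bw: "bwt u = map last L" by (simp add: bwt_def L_def R_def n_def)
  have inR: "\<exists>i<n. L!q = rotate i u" if "q < length L" for q
  proof -
    have "L!q \<in> set R" using that by (metis L_def nth_mem set_sort)
    then show ?thesis by (auto simp: R_def)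
  qed
  have "sorted (rev (bwt u))"
    unfolding sorted_rev_iff_nth_mono
  proof (intro allI impI)
    fix i j assume ij: "i \<le> j" "j < length (bwt u)"
    then have lj: "j < length L" "i < length L" by (auto simp: bw)
    have le: "L!i \<le> L!j" using ij lj by (simp add: L_def sorted_nth_mono)
    show "bwt u ! j \<le> bwt u ! i"
    proof (cases "L!i = L!j")
      case True then show ?thesis using lj by (simp add: bw)
    next
      case False
      then have "L!i < L!j" using le by simp
      moreover obtain i' j' where "i' < n" "L!i = rotate i' u" "j' < n" "L!j = rotate j' u"
        using inR lj by metis
      ultimately show ?thesis using assms lj by (simp add: bw n_def)
    qed
  qed
  moreover have "mset (rev (bwt u)) = mset u"
  proof -
    have "map last R = rotate (n - 1) u"
    proof (rule nth_equalityI)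
      show "length (map last R) = length (rotate (n - 1) u)" by (simp add: R_def n_def)
      fix i assume "i < length (map last R)"
      then have i: "i < n" by (simp add: R_def)
      have "rotate i u \<noteq> []" using False by simp
      then have "last (rotate i u) = rotate i u ! (n - 1)" by (simp add: last_conv_nth n_def)
      also have "\<dots> = u ! ((i + (n-1)) mod n)" using n0 by (simp add: nth_rotate n_def)
      also have "\<dots> = rotate (n-1) u ! i" using i by (simp add: nth_rotate n_def add.commute)
      finally show "map last R ! i = rotate (n - 1) u ! i" using i by (simp add: R_def)
    qed
    then have "mset (map last L) = mset (rotate (n-1) u)" by (metis L_def mset_map mset_sort)
    also have "\<dots> = mset u"
    proof -
      define q where "q = (n - 1) mod length u"
      have "mset (rotate (n-1) u) = mset (drop q u) + mset (take q u)" by (simp add: rotate_drop_take q_def)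
      also have "\<dots> = mset (take q u) + mset (drop q u)" by (rule add.commute)
      also have "\<dots> = mset (take q u @ drop q u)" by (rule mset_append[symmetric])
      finally show ?thesis by simp
    qed
    finally show ?thesis by (simp add: bw)
  qed
  ultimately show ?thesis by (metis properties_for_sort)
qed

definition Fk :: "nat \<Rightarrow> nat list \<Rightarrow> nat list" where
  "Fk m u = concat (map (\<lambda>c. replicate (count_list u c) c) [0..<m])"

lemma Fk_count: "count (mset (Fk m u)) c = (if c < m then count_list u c else 0)"
  by (induction m) (auto simp: Fk_def)

lemma Fk_set: "set (Fk m u) \<subseteq> {..<m}"
  by (induction m) (auto simp: Fk_def)

lemma Fk_sorted: "sorted (Fk m u)"
proof (induction m)
  case (Suc m)
  have "Fk (Suc m) u = Fk m u @ replicate (count_list u m) m" by (simp add: Fk_def)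
  then show ?case using Suc Fk_set[of m u] by (auto simp: sorted_append)
qed (simp add: Fk_def)

lemma clustered_sorted:
  assumes "set u \<subseteq> {..<k}"
  shows "rev (clustered_form k u) = sort u"
proof -
  have r: "map (\<lambda>j. k - 1 - j) [0..<k] = rev [0..<k]"
    by (rule nth_equalityI) (auto simp: rev_nth)
  have "clustered_form k u = concat (map (\<lambda>c. replicate (count_list u c) c) (map (\<lambda>j. k - 1 - j) [0..<k]))"
    unfolding clustered_form_def by (simp add: comp_def)
  also have "\<dots> = concat (map (\<lambda>c. replicate (count_list u c) c) (rev [0..<k]))" by (simp only: r)
  finally have "rev (clustered_form k u) = Fk k u"
    by (simp add: Fk_def rev_concat rev_map comp_def)
  moreover have "mset (Fk k u) = mset u"
  proof (rule multiset_eqI)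
    fix c
    have "count (mset (Fk k u)) c = (if c<k then count_list u c else 0)" by (rule Fk_count)
    moreover have "count (mset u) c = count_list u c" by (rule count_mset)
    moreover have "count_list u c = 0" if "c \<ge> k"
    proof -
      have "c \<notin> set u" using assms that by auto
      then show ?thesis by (rule count_notin)
    qed
    ultimately show "count (mset (Fk k u)) c = count (mset u) c" by auto
  qed
  ultimately show ?thesis using Fk_sorted by (metis properties_for_sort)
qed


theorem corollary6p7:
  fixes k :: nat and l :: real and len :: "nat \<Rightarrow> real" and p :: "nat \<Rightarrow> nat"
  assumes "iet_ok k len p"
    and "\<forall>i<k. p i = k - 1 - i"
  shows "\<forall>w\<in>iet_lang k l len p. \<forall>u\<in>return_words k l len p w.
           bwt u = clustered_form k u"
proof (intro ballI)
  fix w u assume w: "w \<in> iet_lang k l len p" and u: "u \<in> return_words k l len p w"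
  interpret symiet k l len p using assms by unfold_locales
  have su: "set u \<subseteq> {..<k}" and uwL: "u @ w \<in> iet_lang k l len p"
    and nono: "\<not> (\<exists>x y. x \<noteq> [] \<and> y \<noteq> [] \<and> set x \<subseteq> {..<k} \<and> set y \<subseteq> {..<k} \<and> u @ w = x @ w @ y)"
    using u by (auto simp: return_words_def)
  obtain y where y: "u @ w = w @ y" using u by (auto simp: return_words_def)
  define n where "n = length u"
  show "bwt u = clustered_form k u"
  proof (cases "n = 0")
    case True
    then have "u = []" by (simp add: n_def)
    then show ?thesis by (simp add: bwt_def clustered_form_def)
  next
    case False
    then have n: "length u = n" "n > 0" by (auto simp: n_def)
    obtain x0 i0 where x0: "x0 \<in> I" and L: "u @ w = map (tr x0) [i0..<i0 + length (u @ w)]"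
      using uwL unfolding iet_lang_def by blast
    define x where "x = (T ^^ i0) x0"
    have x: "x \<in> I" using x0 Tn_in by (simp add: x_def)
    have s: "\<forall>j < n + length w. tr x j = (u@w)!j"
    proof (intro allI impI)
      fix j assume j: "j < n + length w"
      have "(u@w)!j = map (tr x0) [i0..<i0 + length (u @ w)] ! j" using L by simp
      also have "\<dots> = tr x0 (i0 + j)" using j n by simp
      finally show "tr x j = (u@w)!j" by (simp add: x_def traj_shift add.commute)
    qed
    have pre: "w!t = u!(t mod n)" if "t < length w" for t
      using that
    proof (induction t rule: less_induct)
      case (less t)
      show ?case
      proof (cases "t < n")
        case True
        have "(u@w)!t = (w@y)!t" using y by simp
        then show ?thesis using True less.prems n by (simp add: nth_append)
      next
        case False
        have "(u@w)!t = (w@y)!t" using y by simp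
        then have "w!(t-n) = w!t" using False less.prems n by (simp add: nth_append)
        moreover have "w!(t-n) = u!((t-n) mod n)" using less False n by simp
        moreover have "(t-n) mod n = t mod n" using False by (simp add: le_mod_geq)
        ultimately show ?thesis by simp
      qed
    qed
    have sw: "set w \<subseteq> set u"
    proof
      fix c assume "c \<in> set w"
      then obtain t where "t < length w" "c = w!t" by (metis in_set_conv_nth)
      then have "c = u!(t mod n)" using pre by simp
      then show "c \<in> set u" using n by simp
    qed
    have noocc: "\<forall>q. 0<q \<and> q<n \<longrightarrow> \<not>(\<forall>t<length w. (u@w)!(q+t) = w!t)"
    proof (intro allI impI notI)
      fix q assume q: "0 < q \<and> q < n" and H: "\<forall>t<length w. (u@w)!(q+t) = w!t"
      define Lw where "Lw = u @ w"
      have lL: "length Lw = n + length w" using n by (simp add: Lw_def)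
      have tk: "take (length w) (drop q Lw) = w"
      proof (rule nth_equalityI)
        show "length (take (length w) (drop q Lw)) = length w" using lL q by (auto simp: min_def)
        fix i assume "i < length (take (length w) (drop q Lw))"
        then have i: "i < length w" using lL q by simp
        then have "take (length w) (drop q Lw) ! i = Lw ! (q + i)" using lL q by simp
        then show "take (length w) (drop q Lw) ! i = w ! i" using H i by (simp add: Lw_def)
      qed
      have "Lw = take q Lw @ take (length w) (drop q Lw) @ drop (length w) (drop q Lw)" by (simp only: append_take_drop_id)
      also have "\<dots> = take q Lw @ w @ drop (q + length w) Lw" by (simp only: tk drop_drop add.commute)
      finally have eq: "Lw = take q Lw @ w @ drop (q + length w) Lw" .
      have sL: "set Lw \<subseteq> {..<k}" using su sw by (auto simp: Lw_def)
      have "take q Lw \<noteq> []" "drop (q + length w) Lw \<noteq> []" using q n by (auto simp: Lw_def)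
      moreover have "set (take q Lw) \<subseteq> {..<k}" "set (drop (q + length w) Lw) \<subseteq> {..<k}"
        using sL by (meson order_trans set_take_subset set_drop_subset)+
      ultimately show False using nono eq unfolding Lw_def by blast
    qed
    have rc: "\<forall>i<length u. \<forall>j<length u. rotate i u < rotate j u \<longrightarrow> last (rotate j u) \<le> last (rotate i u)"
      using rot_claim[OF x n s _ noocc] pre n by auto
    have "rev (bwt u) = rev (clustered_form k u)"
      using bwt_sorted[OF rc] clustered_sorted[OF su] by simp
    then show ?thesis by simp
  qed
qed

end
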